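(* Let $\{a_n\}_{n\ge0}$ be a real-valued sequence with $\{a_n\}\in GMS$. The following are equivalent: (i) The series $\sum_{n=0}^\infty a_n$ converges. (ii) The partial sums $\sum_{n=0}^N a_n\cos(nx)$ converge uniformly in $x\in\mathbb{R}$ as $N\to\infty$. (iii) The series $\sum_{n=0}^\infty a_n\cos(nx)$ converges for every $x\in\mathbb{R}$ and its sum is a bounded function of $x$.
   Context: A complex sequence $\{a_n\}_{n\ge0}$ tending to $0$ is general monotone, written $\{a_n\}\in GMS$, if there exist constants $C>1$ and $\lambda>1$ such that for every $n\in\mathbb{N}$, $$\sum_{k=n}^{2n}|a_k-a_{k+1}|\le C\sum_{n/\lambda\le k\le\lambda n}\frac{|a_k|}{k}.$$ *)

theory Defs
  imports "HOL-Analysis.Analysis"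
begin

text \<open>The sequence is indexed from 0 and tends to 0;
  the inequality is required for every n \<ge> 1 (n \<in> \<nat> = {1,2,...}; for n = 0 the
  right-hand side would involve |a_0|/0).\<close>

definition GMS :: "(nat \<Rightarrow> 'a::real_normed_vector) \<Rightarrow> bool" where
  "GMS a \<longleftrightarrow> a \<longlonglongrightarrow> 0 \<and>
     (\<exists>C::real. C > 1 \<and> (\<exists>L::real. L > 1 \<and>
        (\<forall>n::nat. n \<ge> 1 \<longrightarrow>
           (\<Sum>k\<in>{n..2*n}. norm (a k - a (Suc k)))
             \<le> C * (\<Sum>k\<in>{k::nat. real n / L \<le> real k \<and> real k \<le> L * real n}. norm (a k) / real k))))"

end

theory Submission
  imports Defs
begin


lemma abel_id:
  fixes f g :: "nat \<Rightarrow> real"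
  shows "(\<Sum>n\<in>{p..<r}. f n * g n) = (\<Sum>k\<in>{p..<r}. f k) * g r
          + (\<Sum>n\<in>{p..<r}. (\<Sum>k\<in>{p..<Suc n}. f k) * (g n - g (Suc n)))"
proof (induction r)
  case 0 then show ?case by simp
next
  case (Suc r)
  show ?case
  proof (cases "p \<le> r")
    case True
    have e1: "(\<Sum>n\<in>{p..<Suc r}. f n * g n) = (\<Sum>n\<in>{p..<r}. f n * g n) + f r * g r"
      by (rule sum.atLeastLessThan_Suc[OF True])
    have e2: "(\<Sum>k\<in>{p..<Suc r}. f k) = (\<Sum>k\<in>{p..<r}. f k) + f r"
      by (rule sum.atLeastLessThan_Suc[OF True])
    have e3: "(\<Sum>n\<in>{p..<Suc r}. (\<Sum>k\<in>{p..<Suc n}. f k) * (g n - g (Suc n)))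
       = (\<Sum>n\<in>{p..<r}. (\<Sum>k\<in>{p..<Suc n}. f k) * (g n - g (Suc n))) + (\<Sum>k\<in>{p..<Suc r}. f k) * (g r - g (Suc r))"
      by (rule sum.atLeastLessThan_Suc[OF True])
    show ?thesis unfolding e1 e3 Suc.IH unfolding e2 by algebra
  next
    case False
    then show ?thesis by simp
  qed
qed

lemma abel_bound:
  fixes f g :: "nat \<Rightarrow> real"
  assumes A: "\<And>n. p \<le> n \<Longrightarrow> n \<le> r \<Longrightarrow> \<bar>\<Sum>k\<in>{p..<n}. f k\<bar> \<le> B" and B0: "0 \<le> B"
  shows "\<bar>\<Sum>n\<in>{p..<r}. f n * g n\<bar> \<le> B * \<bar>g r\<bar> + B * (\<Sum>n\<in>{p..<r}. \<bar>g n - g (Suc n)\<bar>)"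
proof (cases "p \<le> r")
  case False 
  have "{p..<r} = {}" using False by simp
  then show ?thesis using B0 by simp
next
  case True
  have "\<bar>\<Sum>n\<in>{p..<r}. f n * g n\<bar> \<le> \<bar>(\<Sum>k\<in>{p..<r}. f k) * g r\<bar>
          + \<bar>\<Sum>n\<in>{p..<r}. (\<Sum>k\<in>{p..<Suc n}. f k) * (g n - g (Suc n))\<bar>"
    by (subst abel_id) (rule abs_triangle_ineq)
  also have "\<bar>(\<Sum>k\<in>{p..<r}. f k) * g r\<bar> \<le> B * \<bar>g r\<bar>"
    unfolding abs_mult by (rule mult_right_mono[OF A[OF True order.refl] abs_ge_zero])
  also have "\<bar>\<Sum>n\<in>{p..<r}. (\<Sum>k\<in>{p..<Suc n}. f k) * (g n - g (Suc n))\<bar>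
      \<le> (\<Sum>n\<in>{p..<r}. \<bar>(\<Sum>k\<in>{p..<Suc n}. f k) * (g n - g (Suc n))\<bar>)"
    by (rule sum_abs)
  also have "\<dots> \<le> (\<Sum>n\<in>{p..<r}. B * \<bar>g n - g (Suc n)\<bar>)"
  proof (rule sum_mono)
    fix n assume n: "n \<in> {p..<r}"
    have "\<bar>\<Sum>k\<in>{p..<Suc n}. f k\<bar> \<le> B" using n by (intro A) auto
    then show "\<bar>(\<Sum>k\<in>{p..<Suc n}. f k) * (g n - g (Suc n))\<bar> \<le> B * \<bar>g n - g (Suc n)\<bar>"
      unfolding abs_mult by (rule mult_right_mono) simp
  qed
  also have "\<dots> = B * (\<Sum>n\<in>{p..<r}. \<bar>g n - g (Suc n)\<bar>)" by (rule sum_distrib_left[symmetric])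
  finally show ?thesis by simp
qed

lemma diff_le_var:
  fixes a :: "nat \<Rightarrow> real"
  assumes "i \<le> j"
  shows "\<bar>a i - a j\<bar> \<le> (\<Sum>k\<in>{i..<j}. \<bar>a k - a (Suc k)\<bar>)"
proof -
  have "a i - a j = (\<Sum>k\<in>{i..<j}. a k - a (Suc k))"
    using sum_Suc_diff'[OF assms, of a] by (simp add: sum_subtractf)
  then show ?thesis by (metis sum_abs)
qed

lemma diff_le_var2:
  fixes a :: "nat \<Rightarrow> real"
  assumes "i \<in> {p..<q}" "j \<in> {p..<q}"
  shows "\<bar>a i - a j\<bar> \<le> (\<Sum>k\<in>{p..<q}. \<bar>a k - a (Suc k)\<bar>)"
proof (cases "i \<le> j")
  case True
  have "\<bar>a i - a j\<bar> \<le> (\<Sum>k\<in>{i..<j}. \<bar>a k - a (Suc k)\<bar>)" by (rule diff_le_var[OF True])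
  also have "\<dots> \<le> (\<Sum>k\<in>{p..<q}. \<bar>a k - a (Suc k)\<bar>)"
    using assms by (intro sum_mono2) auto
  finally show ?thesis .
next
  case False
  have "\<bar>a i - a j\<bar> = \<bar>a j - a i\<bar>" by simp
  also have "\<dots> \<le> (\<Sum>k\<in>{j..<i}. \<bar>a k - a (Suc k)\<bar>)" using False by (intro diff_le_var) auto
  also have "\<dots> \<le> (\<Sum>k\<in>{p..<q}. \<bar>a k - a (Suc k)\<bar>)"
    using assms by (intro sum_mono2) auto
  finally show ?thesis .
qed

lemma piece:
  fixes a :: "nat \<Rightarrow> real"
  shows "(\<Sum>k\<in>{p..<q}. \<bar>a k\<bar>) \<le> \<bar>\<Sum>k\<in>{p..<q}. a k\<bar> + real (q - p) * (\<Sum>k\<in>{p..<q}. \<bar>a k - a (Suc k)\<bar>)"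
proof -
  let ?V = "(\<Sum>k\<in>{p..<q}. \<bar>a k - a (Suc k)\<bar>)"
  have V0: "0 \<le> ?V" by (intro sum_nonneg) auto
  show ?thesis
  proof (cases "\<forall>k\<in>{p..<q}. 0 \<le> a k")
    case True
    then have "(\<Sum>k\<in>{p..<q}. \<bar>a k\<bar>) = (\<Sum>k\<in>{p..<q}. a k)" by (intro sum.cong) auto
    moreover have "(\<Sum>k\<in>{p..<q}. a k) \<ge> 0" using True by (intro sum_nonneg) auto
    ultimately show ?thesis using V0 by simp
  next
    case F1: False
    show ?thesis
    proof (cases "\<forall>k\<in>{p..<q}. a k \<le> 0")
      case True
      then have "(\<Sum>k\<in>{p..<q}. \<bar>a k\<bar>) = (\<Sum>k\<in>{p..<q}. - a k)"
        by (intro sum.cong) auto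
      also have "\<dots> = - (\<Sum>k\<in>{p..<q}. a k)" by (rule sum_negf)
      finally have "(\<Sum>k\<in>{p..<q}. \<bar>a k\<bar>) = - (\<Sum>k\<in>{p..<q}. a k)" .
      moreover have "(\<Sum>k\<in>{p..<q}. a k) \<le> 0" using True by (intro sum_nonpos) auto
      ultimately show ?thesis using V0 by simp
    next
      case False
      from F1 obtain i where i: "i \<in> {p..<q}" "a i < 0" by force
      from False obtain j where j: "j \<in> {p..<q}" "a j > 0" by force
      have "\<bar>a k\<bar> \<le> ?V" if k: "k \<in> {p..<q}" for k
      proof (cases "a k \<ge> 0")
        case True
        have "\<bar>a k\<bar> \<le> \<bar>a k - a i\<bar>" using True i by simp
        also have "\<dots> \<le> ?V" by (rule diff_le_var2[OF k i(1)])
        finally show ?thesis .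
      next
        case False
        have "\<bar>a k\<bar> \<le> \<bar>a k - a j\<bar>" using False j by simp
        also have "\<dots> \<le> ?V" by (rule diff_le_var2[OF k j(1)])
        finally show ?thesis .
      qed
      then have "(\<Sum>k\<in>{p..<q}. \<bar>a k\<bar>) \<le> (\<Sum>k\<in>{p..<q}. ?V)" by (intro sum_mono) auto
      also have "\<dots> = real (q - p) * ?V" by simp
      finally show ?thesis by simp
    qed
  qed
qed

lemma chunk:
  fixes a :: "nat \<Rightarrow> real"
  assumes t: "t \<ge> 1" and eps: "\<And>p' q'. p' \<ge> p0 \<Longrightarrow> \<bar>\<Sum>k\<in>{p'..<q'}. a k\<bar> \<le> \<epsilon>"
  shows "p \<ge> p0 \<Longrightarrow> (\<Sum>k\<in>{p..<q}. \<bar>a k\<bar>) \<le> (real ((q - p) div t) + 1) * \<epsilon>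
            + real t * (\<Sum>k\<in>{p..<q}. \<bar>a k - a (Suc k)\<bar>)"
proof (induction "q - p" arbitrary: p rule: less_induct)
  case less
  have e0: "0 \<le> \<epsilon>" using eps[of p0 p0] by simp
  show ?case
  proof (cases "q - p \<le> t")
    case True
    have "(\<Sum>k\<in>{p..<q}. \<bar>a k\<bar>) \<le> \<bar>\<Sum>k\<in>{p..<q}. a k\<bar> + real (q - p) * (\<Sum>k\<in>{p..<q}. \<bar>a k - a (Suc k)\<bar>)"
      by (rule piece)
    also have "\<dots> \<le> \<epsilon> + real t * (\<Sum>k\<in>{p..<q}. \<bar>a k - a (Suc k)\<bar>)"
      using eps[OF less.prems] True by (intro add_mono mult_right_mono) (auto intro: sum_nonneg)
    also have "\<dots> \<le> (real ((q - p) div t) + 1) * \<epsilon> + real t * (\<Sum>k\<in>{p..<q}. \<bar>a k - a (Suc k)\<bar>)"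
      using e0 by (simp add: algebra_simps)
    finally show ?thesis .
  next
    case False
    let ?m = "p + t"
    have pm: "p \<le> ?m" "?m \<le> q" using False by auto
    have IH: "(\<Sum>k\<in>{?m..<q}. \<bar>a k\<bar>) \<le> (real ((q - ?m) div t) + 1) * \<epsilon>
            + real t * (\<Sum>k\<in>{?m..<q}. \<bar>a k - a (Suc k)\<bar>)"
      using less.hyps[of ?m] less.prems t False by auto
    have P1: "(\<Sum>k\<in>{p..<?m}. \<bar>a k\<bar>) \<le> \<epsilon> + real t * (\<Sum>k\<in>{p..<?m}. \<bar>a k - a (Suc k)\<bar>)"
    proof -
      have "(\<Sum>k\<in>{p..<?m}. \<bar>a k\<bar>) \<le> \<bar>\<Sum>k\<in>{p..<?m}. a k\<bar> + real (?m - p) * (\<Sum>k\<in>{p..<?m}. \<bar>a k - a (Suc k)\<bar>)"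
        by (rule piece)
      then show ?thesis using eps[OF less.prems, of ?m] by simp
    qed
    have dv: "(q - p) div t = (q - ?m) div t + 1"
      using False t by (simp add: le_div_geq)
    have "(\<Sum>k\<in>{p..<q}. \<bar>a k\<bar>) = (\<Sum>k\<in>{p..<?m}. \<bar>a k\<bar>) + (\<Sum>k\<in>{?m..<q}. \<bar>a k\<bar>)"
      using pm by (simp add: sum.atLeastLessThan_concat)
    moreover have "(\<Sum>k\<in>{p..<q}. \<bar>a k - a (Suc k)\<bar>) = (\<Sum>k\<in>{p..<?m}. \<bar>a k - a (Suc k)\<bar>) + (\<Sum>k\<in>{?m..<q}. \<bar>a k - a (Suc k)\<bar>)"
      using pm by (simp add: sum.atLeastLessThan_concat)
    ultimately show ?thesis using IH P1 dv by (simp add: algebra_simps)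
  qed
qed

lemma tiling:
  fixes f :: "nat \<Rightarrow> real"
  shows "(\<Sum>k\<in>{m..<2^R*m}. f k) = (\<Sum>i<R. \<Sum>k\<in>{2^i*m..<2^Suc i*m}. f k)"
proof (induction R)
  case 0 then show ?case by simp
next
  case (Suc R)
  have "(\<Sum>k\<in>{m..<2^Suc R*m}. f k) = (\<Sum>k\<in>{m..<2^R*m}. f k) + (\<Sum>k\<in>{2^R*m..<2^Suc R*m}. f k)"
    by (rule sum.atLeastLessThan_concat[symmetric]) auto
  then show ?case using Suc by simp
qed

lemma cos_step: "\<bar>cos (real (Suc n) * x) - cos (real n * x)\<bar> \<le> 2 * \<bar>sin (x/2)\<bar>"
proof -
  have "cos (real (Suc n) * x) - cos (real n * x) = 2 * sin ((real (Suc n) * x + real n * x)/2) * sin ((real n * x - real (Suc n) * x)/2)"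
    by (rule cos_diff_cos)
  also have "(real n * x - real (Suc n) * x)/2 = - (x/2)" by (simp add: algebra_simps)
  finally have "\<bar>cos (real (Suc n) * x) - cos (real n * x)\<bar> = 2 * \<bar>sin ((real (Suc n) * x + real n * x)/2)\<bar> * \<bar>sin (x/2)\<bar>"
    by (simp add: abs_mult)
  also have "\<dots> \<le> 2 * 1 * \<bar>sin (x/2)\<bar>" by (intro mult_right_mono mult_left_mono) auto
  finally show ?thesis by simp
qed

lemma dirichlet:
  assumes "r \<le> n"
  shows "\<bar>sin (x/2)\<bar> * \<bar>\<Sum>k\<in>{r..<n}. cos (real k * x)\<bar> \<le> 1"
proof -
  define h where "h i = sin ((real i - 1/2) * x)" for i :: nat
  have "2 * sin (x/2) * cos (real k * x) = h (Suc k) - h k" for k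
  proof -
    have 1: "h (Suc k) = sin (real k * x + x/2)" unfolding h_def by (simp add: algebra_simps)
    have 2: "h k = sin (real k * x - x/2)" unfolding h_def by (simp add: algebra_simps)
    have "sin (real k * x + x/2) - sin (real k * x - x/2) = 2 * sin (x/2) * cos (real k * x)"
      unfolding sin_add sin_diff by algebra
    then show ?thesis unfolding 1 2 by simp
  qed
  then have "2 * sin (x/2) * (\<Sum>k\<in>{r..<n}. cos (real k * x)) = (\<Sum>k\<in>{r..<n}. h (Suc k) - h k)"
    by (simp add: sum_distrib_left mult.assoc)
  also have "\<dots> = h n - h r" by (rule sum_Suc_diff'[OF assms])
  finally have eq: "2 * sin (x/2) * (\<Sum>k\<in>{r..<n}. cos (real k * x)) = h n - h r" .
  have "\<bar>h n - h r\<bar> \<le> \<bar>h n\<bar> + \<bar>h r\<bar>" by (rule abs_triangle_ineq4)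
  also have "\<dots> \<le> 1 + 1" unfolding h_def by (intro add_mono abs_sin_le_one)
  finally have "\<bar>2 * sin (x/2) * (\<Sum>k\<in>{r..<n}. cos (real k * x))\<bar> \<le> 2" unfolding eq by simp
  then show ?thesis by (simp add: abs_mult)
qed



lemma key:
  fixes a :: "nat \<Rightarrow> real"
  assumes gms: "GMS a" and sa: "summable a"
  shows "\<exists>\<Lambda> N. N \<ge> 1 \<and> (\<forall>P\<ge>N. \<forall>Q. (\<Sum>k\<in>{P..<Q}. \<bar>a k - a (Suc k)\<bar>) \<le> \<Lambda> / real P)"
proof -
  define V where "V n = (\<Sum>k\<in>{n..2*n}. \<bar>a k - a (Suc k)\<bar>)" for n
  define \<phi> where "\<phi> m = (\<Sum>k\<in>{m..<2*m}. \<bar>a k\<bar>)" for m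
  from gms obtain C L where C: "C > 1" and L: "L > 1" and a0: "a \<longlonglongrightarrow> 0"
    and G0: "\<And>n. n \<ge> 1 \<Longrightarrow> V n \<le> C * (\<Sum>k\<in>{k::nat. real n / L \<le> real k \<and> real k \<le> L * real n}. \<bar>a k\<bar> / real k)"
    unfolding GMS_def V_def real_norm_def by blast
  have "Bseq a" using a0 convergent_imp_Bseq convergent_def by blast
  then obtain Ba where Ba: "Ba > 0" "\<And>k. \<bar>a k\<bar> \<le> Ba"
    by (rule BseqE) (metis real_norm_def)
  obtain N0 where N0: "\<And>m n. m \<ge> N0 \<Longrightarrow> \<bar>sum a {m..<n}\<bar> < 1"
    using sa unfolding summable_Cauchy by (metis real_norm_def zero_less_one)
  obtain R :: nat where R: "L^2 < 2^R" using real_arch_pow[of 2 "L^2"] by auto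
  have V0: "0 \<le> V n" for n unfolding V_def by (intro sum_nonneg) auto
  have phi0: "0 \<le> \<phi> n" for n unfolding \<phi>_def by (intro sum_nonneg) auto
  have phiB: "\<phi> m \<le> real m * Ba" for m
  proof -
    have "\<phi> m \<le> of_nat (card {m..<2*m}) * Ba" unfolding \<phi>_def by (rule sum_bounded_above) (use Ba in auto)
    then show ?thesis by simp
  qed
  have V1: "V n \<le> C * L / real n * (\<Sum>i<R. \<phi> (2^i * nat \<lceil>real n / L\<rceil>))" if n1: "n \<ge> 1" for n
  proof -
    define m0 where "m0 = nat \<lceil>real n / L\<rceil>"
    have m0ge: "real m0 \<ge> real n / L" unfolding m0_def by (rule real_nat_ceiling_ge)
    have npos: "real n > 0" using n1 by simp
    define W where "W = {k::nat. real n / L \<le> real k \<and> real k \<le> L * real n}"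
    have Wsub: "W \<subseteq> {m0..<2^R*m0}"
    proof
      fix k assume k: "k \<in> W"
      then have k1: "real n / L \<le> real k" and k2: "real k \<le> L * real n" unfolding W_def by auto
      have "\<lceil>real n / L\<rceil> \<le> int k" using k1 by (intro ceiling_le) simp
      then have "m0 \<le> k" unfolding m0_def using k1 by simp
      moreover have "real k < 2^R * real m0"
      proof -
        have "L * real n = L^2 * (real n / L)" using L by (simp add: power2_eq_square field_simps)
        also have "\<dots> < 2^R * (real n / L)" using R npos L by (intro mult_strict_right_mono) auto
        also have "\<dots> \<le> 2^R * real m0" using m0ge by (intro mult_left_mono) auto
        finally show ?thesis using k2 by simp
      qed
      then have "k < 2^R * m0" by (metis of_nat_less_iff of_nat_mult of_nat_numeral of_nat_power)
      ultimately show "k \<in> {m0..<2^R*m0}" by simp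
    qed
    have s1: "(\<Sum>k\<in>W. \<bar>a k\<bar> / real k) \<le> (\<Sum>k\<in>W. L / real n * \<bar>a k\<bar>)"
    proof (rule sum_mono)
      fix k assume k: "k \<in> W"
      then have k1: "real n / L \<le> real k" unfolding W_def by auto
      have kpos: "real k > 0" using k1 npos L by (smt (verit) divide_pos_pos)
      have "1 / real k \<le> L / real n" using k1 kpos npos L by (simp add: field_simps)
      then show "\<bar>a k\<bar> / real k \<le> L / real n * \<bar>a k\<bar>"
        using mult_right_mono[of "1 / real k" "L / real n" "\<bar>a k\<bar>"] by simp
    qed
    have s2: "(\<Sum>k\<in>W. L / real n * \<bar>a k\<bar>) = L / real n * (\<Sum>k\<in>W. \<bar>a k\<bar>)" by (simp add: sum_distrib_left)
    have s3: "(\<Sum>k\<in>W. \<bar>a k\<bar>) \<le> (\<Sum>k\<in>{m0..<2^R*m0}. \<bar>a k\<bar>)"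
      using Wsub by (intro sum_mono2) auto
    have s4: "(\<Sum>k\<in>{m0..<2^R*m0}. \<bar>a k\<bar>) = (\<Sum>i<R. \<phi> (2^i * m0))" unfolding tiling \<phi>_def by (simp add: mult.assoc)
    have LN: "L / real n \<ge> 0" using L npos by simp
    have "(\<Sum>k\<in>W. \<bar>a k\<bar> / real k) \<le> L / real n * (\<Sum>k\<in>{m0..<2^R*m0}. \<bar>a k\<bar>)"
      using s1 s2 mult_left_mono[OF s3 LN] by linarith
    then have "(\<Sum>k\<in>W. \<bar>a k\<bar> / real k) \<le> L / real n * (\<Sum>i<R. \<phi> (2^i * m0))"
      unfolding s4 .
    then have "C * (\<Sum>k\<in>W. \<bar>a k\<bar> / real k) \<le> C * (L / real n * (\<Sum>i<R. \<phi> (2^i * m0)))"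
      using C by (intro mult_left_mono) auto
    moreover have "V n \<le> C * (\<Sum>k\<in>W. \<bar>a k\<bar> / real k)" using G0[OF n1] unfolding W_def .
    ultimately show ?thesis unfolding m0_def by (simp add: mult.assoc)
  qed
  have CH: "\<phi> n \<le> (real (n div t) + 1) + real t * V n" if "n \<ge> N0" "t \<ge> 1" for n t
  proof -
    have "\<phi> n \<le> (real ((2*n - n) div t) + 1) * 1 + real t * (\<Sum>k\<in>{n..<2*n}. \<bar>a k - a (Suc k)\<bar>)"
      unfolding \<phi>_def
    proof (rule chunk[OF that(2) _ that(1)])
      show "\<And>p' q'. p' \<ge> N0 \<Longrightarrow> \<bar>\<Sum>k\<in>{p'..<q'}. a k\<bar> \<le> 1" using N0 less_imp_le by blast
    qed
    also have "(\<Sum>k\<in>{n..<2*n}. \<bar>a k - a (Suc k)\<bar>) \<le> V n"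
      unfolding V_def by (intro sum_mono2) auto
    finally show ?thesis using that by (simp add: mult_left_mono)
  qed
  define D :: nat where "D = nat \<lceil>C * L * real R * 2^(Suc R)\<rceil> + 1"
  have D1: "D \<ge> 1" unfolding D_def by simp
  have Dge: "real D \<ge> C * L * real R * 2^(Suc R)" unfolding D_def
    using real_nat_ceiling_ge[of "C * L * real R * 2^(Suc R)"] by simp
  define N1 :: nat where "N1 = 2*D + nat \<lceil>L * real N0\<rceil> + N0 + 1"
  define A :: real where "A = 2 * real D + 1"
  define Gb :: real where "Gb = max (2*A) (real N1 * Ba)"
  have A0: "A \<ge> 0" unfolding A_def by simp
  have Gb0: "Gb \<ge> 0" "A \<le> Gb / 2" "real N1 * Ba \<le> Gb" unfolding Gb_def using A0 by auto
  have N1props: "n \<ge> 2*D" "real n \<ge> L * real N0" "n \<ge> N0" "n \<ge> 1" if "n \<ge> N1" for n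
  proof -
    show "n \<ge> 2*D" "n \<ge> N0" "n \<ge> 1" using that unfolding N1_def by auto
    have "L * real N0 \<le> real (nat \<lceil>L * real N0\<rceil>)" by (rule real_nat_ceiling_ge)
    also have "\<dots> \<le> real n" using that unfolding N1_def by (simp only: of_nat_le_iff)
    finally show "real n \<ge> L * real N0" .
  qed
  have m0ge: "nat \<lceil>real n / L\<rceil> \<ge> N0" "nat \<lceil>real n / L\<rceil> \<le> n" if "n \<ge> N1" for n
  proof -
    have "real N0 \<le> real n / L" using N1props(2)[OF that] L by (simp add: field_simps)
    also have "\<dots> \<le> real (nat \<lceil>real n / L\<rceil>)" by (rule real_nat_ceiling_ge)
    finally show "nat \<lceil>real n / L\<rceil> \<ge> N0" by simp
    have nl: "real n / L \<le> real n" using L mult_right_mono[of 1 L "real n"] by (simp add: field_simps)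
    then show "nat \<lceil>real n / L\<rceil> \<le> n" by simp
  qed
  have Cpos: "C * L * real R \<ge> 0" using C L by simp
  have STEP: "\<phi> n \<le> Gb + Ba * real n / 2^(Suc j)"
    if n: "n \<ge> N1" and hyp: "\<And>m. m \<ge> N0 \<Longrightarrow> \<phi> m \<le> Gb + Ba * real m / 2^j" for n j
  proof -
    note nP = N1props[OF n]
    define t where "t = n div D"
    define m0 where "m0 = nat \<lceil>real n / L\<rceil>"
    have t1: "t \<ge> 1" using D1 nP(1) unfolding t_def by (simp add: Suc_le_eq div_greater_zero_iff)
    have tD: "t * D \<le> n" unfolding t_def by simp
    have ndt: "n div t \<le> 2*D"
    proof -
      have md: "n mod D < D" using D1 by simp
      have eq: "t * D + n mod D = n" unfolding t_def by (rule div_mult_mod_eq)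
      have "(2*D)*t = 2*(t*D)" by simp
      then have "n < (2*D)*t" using md eq nP(1) by linarith
      then show ?thesis using less_mult_imp_div_less[of n "2*D" t] by simp
    qed
    have npos: "real n > 0" using nP by simp
    have Dpos: "real D > 0" using D1 by simp
    have tn: "real t \<le> real n / real D"
    proof -
      have "real t * real D \<le> real n" using tD by (metis of_nat_le_iff of_nat_mult)
      then show ?thesis using Dpos by (simp add: field_simps)
    qed
    define S where "S = (\<Sum>i<R. \<phi> (2^i * m0))"
    define X where "X = Gb + Ba * (2^R * real n) / 2^j"
    have X0: "X \<ge> 0" unfolding X_def using Gb0 Ba npos by simp
    have h1: "\<phi> n \<le> (real (n div t) + 1) + real t * V n" by (rule CH[OF nP(3) t1])
    have h2: "real (n div t) + 1 \<le> A" unfolding A_def using ndt by (metis add_le_cancel_right of_nat_le_iff of_nat_mult of_nat_numeral mult_2)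
    have h3: "real t * V n \<le> real n / real D * V n" using tn V0 by (rule mult_right_mono)
    have h4: "V n \<le> C * L / real n * S" unfolding S_def m0_def by (rule V1[OF nP(4)])
    have h5: "real n / real D * V n \<le> real n / real D * (C * L / real n * S)"
      using h4 npos Dpos by (intro mult_left_mono) auto
    have h6: "real n / real D * (C * L / real n * S) = C * L / real D * S" using npos by (simp add: field_simps)
    have h7: "S \<le> real R * X"
    proof -
      have "S \<le> of_nat (card {..<R}) * X" unfolding S_def
      proof (rule sum_bounded_above)
        fix i assume i: "i \<in> {..<R}"
        have m0N: "m0 \<ge> N0" "m0 \<le> n" unfolding m0_def using m0ge[OF n] by auto
        have "N0 \<le> 2^i * m0" using m0N by (metis le_trans mult_le_mono1 one_le_numeral one_le_power mult_1)
        then have "\<phi> (2^i * m0) \<le> Gb + Ba * real (2^i * m0) / 2^j" by (rule hyp)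
        also have "real (2^i * m0) \<le> 2^R * real n"
        proof -
          have "(2::real)^i \<le> 2^R" using i by (intro power_increasing) auto
          moreover have "real m0 \<le> real n" using m0N by simp
          ultimately show ?thesis by (simp add: mult_mono)
        qed
        then have "Ba * real (2^i * m0) / 2^j \<le> Ba * (2^R * real n) / 2^j"
          using Ba by (intro divide_right_mono mult_left_mono) auto
        finally show "\<phi> (2^i * m0) \<le> X" unfolding X_def by simp
      qed
      then show ?thesis by simp
    qed
    have CLD: "C * L / real D \<ge> 0" using C L Dpos by simp
    have h8: "C * L / real D * S \<le> C * L / real D * (real R * X)" using h7 CLD by (rule mult_left_mono)
    have h9: "C * L / real D * (real R * X) \<le> X / 2^(Suc R)"
    proof -
      have "C * L * real R * 2^(Suc R) \<le> real D" by (rule Dge)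
      then have "C * L * real R \<le> real D / 2^(Suc R)" by (simp add: field_simps)
      then have "C * L * real R / real D \<le> 1 / 2^(Suc R)" using Dpos by (simp add: field_simps)
      then have "C * L * real R / real D * X \<le> 1 / 2^(Suc R) * X" using X0 by (rule mult_right_mono)
      then show ?thesis by (simp add: field_simps)
    qed
    have h10: "X / 2^(Suc R) \<le> Gb / 2 + Ba * real n / 2^(Suc j)"
    proof -
      have "X / 2^(Suc R) = Gb / 2^(Suc R) + Ba * real n / 2^(Suc j)" unfolding X_def
        by (simp add: field_simps power_Suc)
      moreover have "Gb / 2^(Suc R) \<le> Gb / 2"
        using Gb0(1) by (intro divide_left_mono) (auto simp: power_Suc)
      ultimately show ?thesis by simp
    qed
    show ?thesis using h1 h2 h3 h5 h6 h8 h9 h10 Gb0(2) by linarith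
  qed
  have IND: "\<forall>m\<ge>N0. \<phi> m \<le> Gb + Ba * real m / 2^j" for j
  proof (induction j)
    case 0
    show ?case using phiB Gb0(1) by (simp add: mult.commute add_increasing)
  next
    case (Suc j)
    show ?case
    proof (intro allI impI)
      fix m assume m: "m \<ge> N0"
      show "\<phi> m \<le> Gb + Ba * real m / 2^(Suc j)"
      proof (cases "m \<ge> N1")
        case True
        show ?thesis by (rule STEP[OF True]) (use Suc.IH in auto)
      next
        case False
        have "\<phi> m \<le> real m * Ba" by (rule phiB)
        also have "\<dots> \<le> real N1 * Ba" using False Ba by (intro mult_right_mono) auto
        also have "\<dots> \<le> Gb" by (rule Gb0(3))
        also have "\<dots> \<le> Gb + Ba * real m / 2^(Suc j)" using Ba by simp
        finally show ?thesis .
      qed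
    qed
  qed
  have PHI: "\<phi> m \<le> Gb" if m: "m \<ge> N0" for m
  proof (rule ccontr)
    assume "\<not> \<phi> m \<le> Gb"
    then have d: "\<phi> m - Gb > 0" by simp
    obtain j :: nat where j: "Ba * real m / (\<phi> m - Gb) < 2^j" using real_arch_pow[of 2] by auto
    then have "Ba * real m < (\<phi> m - Gb) * 2^j" using d by (simp add: field_simps)
    then have "Ba * real m / 2^j < \<phi> m - Gb" by (simp add: field_simps)
    moreover have "\<phi> m \<le> Gb + Ba * real m / 2^j" using IND m by blast
    ultimately show False by simp
  qed
  have VB: "V m \<le> C * L * real R * Gb / real m" if m: "m \<ge> N1" for m
  proof -
    note mP = N1props[OF m]
    have "(\<Sum>i<R. \<phi> (2^i * nat \<lceil>real m / L\<rceil>)) \<le> of_nat (card {..<R}) * Gb"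
    proof (rule sum_bounded_above)
      fix i assume i: "i \<in> {..<R}"
      have "N0 \<le> 2^i * nat \<lceil>real m / L\<rceil>" using m0ge(1)[OF m]
        by (metis le_trans mult_le_mono1 one_le_numeral one_le_power mult_1)
      then show "\<phi> (2^i * nat \<lceil>real m / L\<rceil>) \<le> Gb" by (rule PHI)
    qed
    then have "(\<Sum>i<R. \<phi> (2^i * nat \<lceil>real m / L\<rceil>)) \<le> real R * Gb" by simp
    moreover have "C * L / real m \<ge> 0" using C L by simp
    ultimately have "C * L / real m * (\<Sum>i<R. \<phi> (2^i * nat \<lceil>real m / L\<rceil>)) \<le> C * L / real m * (real R * Gb)"
      by (intro mult_left_mono)
    with V1[OF mP(4)] show ?thesis by (simp add: field_simps)
  qed
  define \<Lambda> where "\<Lambda> = 2 * (C * L * real R * Gb)"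
  have "\<forall>P\<ge>N1. \<forall>Q. (\<Sum>k\<in>{P..<Q}. \<bar>a k - a (Suc k)\<bar>) \<le> \<Lambda> / real P"
  proof (intro allI impI)
    fix P Q :: nat assume P: "P \<ge> N1"
    note PP = N1props[OF P]
    define K where "K = C * L * real R * Gb"
    have K0: "K \<ge> 0" unfolding K_def using Cpos Gb0 by simp
    have "Q \<le> 2^Q * P" using PP(4) less_exp[of Q] by (metis less_imp_le_nat mult_le_mono2 mult_1_right le_trans)
    then have "(\<Sum>k\<in>{P..<Q}. \<bar>a k - a (Suc k)\<bar>) \<le> (\<Sum>k\<in>{P..<2^Q*P}. \<bar>a k - a (Suc k)\<bar>)"
      by (intro sum_mono2) auto
    also have "\<dots> = (\<Sum>i<Q. \<Sum>k\<in>{2^i*P..<2^Suc i*P}. \<bar>a k - a (Suc k)\<bar>)" by (rule tiling)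
    also have "\<dots> \<le> (\<Sum>i<Q. K / real P * (1/2)^i)"
    proof (rule sum_mono)
      fix i assume i: "i \<in> {..<Q}"
      have ge: "2^i * P \<ge> N1" using P by (metis le_trans mult_le_mono1 one_le_numeral one_le_power mult_1)
      have "(\<Sum>k\<in>{2^i*P..<2^Suc i*P}. \<bar>a k - a (Suc k)\<bar>) \<le> V (2^i*P)"
        unfolding V_def by (intro sum_mono2) auto
      also have "\<dots> \<le> K / real (2^i*P)" using VB[OF ge] unfolding K_def .
      also have "\<dots> = K / real P * (1/2)^i" by (simp add: power_one_over field_simps)
      finally show "(\<Sum>k\<in>{2^i*P..<2^Suc i*P}. \<bar>a k - a (Suc k)\<bar>) \<le> K / real P * (1/2)^i" .
    qed
    also have "\<dots> = K / real P * (\<Sum>i<Q. (1/2::real)^i)" by (simp add: sum_distrib_left)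
    also have "\<dots> \<le> K / real P * 2"
    proof (rule mult_left_mono)
      show "(\<Sum>i<Q. (1/2::real)^i) \<le> 2" by (simp add: sum_gp_strict)
      show "0 \<le> K / real P" using K0 by simp
    qed
    also have "\<dots> = \<Lambda> / real P" unfolding \<Lambda>_def K_def by simp
    finally show "(\<Sum>k\<in>{P..<Q}. \<bar>a k - a (Suc k)\<bar>) \<le> \<Lambda> / real P" .
  qed
  moreover have "N1 \<ge> 1" unfolding N1_def by simp
  ultimately show ?thesis by blast
qed


lemma abd_from_var:
  fixes a :: "nat \<Rightarrow> real"
  assumes a0: "a \<longlonglongrightarrow> 0" and var: "\<And>Q. (\<Sum>k\<in>{q..<Q}. \<bar>a k - a (Suc k)\<bar>) \<le> B"
  shows "\<bar>a q\<bar> \<le> B"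
proof -
  have "(\<lambda>Q. a q - a Q) \<longlonglongrightarrow> a q - 0" by (intro tendsto_diff tendsto_const a0)
  then have "(\<lambda>Q. \<bar>a q - a Q\<bar>) \<longlonglongrightarrow> \<bar>a q - 0\<bar>" by (rule tendsto_rabs)
  then have lim: "(\<lambda>Q. \<bar>a q - a Q\<bar>) \<longlonglongrightarrow> \<bar>a q\<bar>" by simp
  have ex: "\<exists>N. \<forall>Q\<ge>N. \<bar>a q - a Q\<bar> \<le> B"
  proof (intro exI allI impI)
    fix Q assume Q: "Q \<ge> q"
    have "\<bar>a q - a Q\<bar> \<le> (\<Sum>k\<in>{q..<Q}. \<bar>a k - a (Suc k)\<bar>)" by (rule diff_le_var[OF Q])
    also have "\<dots> \<le> B" by (rule var)
    finally show "\<bar>a q - a Q\<bar> \<le> B" .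
  qed
  show ?thesis by (rule LIMSEQ_le_const2[OF lim ex])
qed

lemma tail_est:
  fixes a :: "nat \<Rightarrow> real"
  assumes eps: "\<And>q'. \<bar>\<Sum>k\<in>{p..<q'}. a k\<bar> \<le> \<epsilon>"
    and var: "\<And>P Q. P \<ge> p \<Longrightarrow> (\<Sum>k\<in>{P..<Q}. \<bar>a k - a (Suc k)\<bar>) \<le> \<Lambda> / real P"
    and abd: "\<And>P. P \<ge> p \<Longrightarrow> \<bar>a P\<bar> \<le> \<Lambda> / real P"
    and p1: "p \<ge> 1" and L0: "\<Lambda> \<ge> 0" and M0: "M > 0" and e0: "\<epsilon> \<ge> 0"
  shows "\<bar>\<Sum>k\<in>{p..<q}. a k * cos (real k * x)\<bar> \<le> \<epsilon> * (3 + 2 * M) + 2 * \<Lambda> / M"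
proof -
  define s where "s = \<bar>sin (x/2)\<bar>"
  have s0: "s \<ge> 0" "s \<le> 1" unfolding s_def by auto
  have RHS0: "\<epsilon> * (3 + 2 * M) + 2 * \<Lambda> / M \<ge> \<epsilon>" using e0 M0 L0 by (simp add: algebra_simps)
  have dcos: "\<bar>cos (real n * x) - cos (real (Suc n) * x)\<bar> \<le> 2 * s" for n
    using cos_step[of n x] unfolding s_def by (simp add: abs_minus_commute)
  have LOW: "\<bar>\<Sum>k\<in>{p..<r}. a k * cos (real k * x)\<bar> \<le> \<epsilon> + \<epsilon> * (real (r - p) * (2 * s))" for r
  proof -
    have h1: "\<bar>\<Sum>k\<in>{p..<r}. a k * cos (real k * x)\<bar> \<le> \<epsilon> * \<bar>cos (real r * x)\<bar>
        + \<epsilon> * (\<Sum>n\<in>{p..<r}. \<bar>cos (real n * x) - cos (real (Suc n) * x)\<bar>)"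
      by (rule abel_bound[OF eps e0])
    have h2: "\<epsilon> * \<bar>cos (real r * x)\<bar> \<le> \<epsilon>" using e0 mult_left_mono[of "\<bar>cos (real r * x)\<bar>" 1 \<epsilon>] by simp
    have h3: "(\<Sum>n\<in>{p..<r}. \<bar>cos (real n * x) - cos (real (Suc n) * x)\<bar>) \<le> of_nat (card {p..<r}) * (2 * s)"
      by (rule sum_bounded_above) (rule dcos)
    have h4: "\<epsilon> * (\<Sum>n\<in>{p..<r}. \<bar>cos (real n * x) - cos (real (Suc n) * x)\<bar>) \<le> \<epsilon> * (real (r - p) * (2 * s))"
      using mult_left_mono[OF h3 e0] by simp
    show ?thesis using h1 h2 h4 by linarith
  qed
  show ?thesis
  proof (cases "s = 0")
    case True
    show ?thesis using LOW[of q] True RHS0 by simp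
  next
    case False
    then have spos: "s > 0" using s0 by simp
    define T where "T = M / s"
    have Tpos: "T > 0" unfolding T_def using M0 spos by simp
    define c where "c = nat \<lceil>T\<rceil>"
    have cT: "real c \<ge> T" "real c < T + 1" unfolding c_def using ceiling_correct[of T] Tpos by auto
    show ?thesis
    proof (cases "p \<le> q")
      case False
      then show ?thesis using RHS0 e0 by simp
    next
      case pq: True
      define r where "r = min q (max p c)"
      have pr: "p \<le> r" "r \<le> q" unfolding r_def using pq by auto
      have split: "(\<Sum>k\<in>{p..<q}. a k * cos (real k * x)) = (\<Sum>k\<in>{p..<r}. a k * cos (real k * x)) + (\<Sum>k\<in>{r..<q}. a k * cos (real k * x))"
        using pr by (simp add: sum.atLeastLessThan_concat)
      have low: "\<bar>\<Sum>k\<in>{p..<r}. a k * cos (real k * x)\<bar> \<le> \<epsilon> * (3 + 2 * M)"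
      proof -
        have "real (r - p) * (2 * s) \<le> 2 * M + 2"
        proof (cases "r = p")
          case True then show ?thesis using M0 by simp
        next
          case False
          then have "r \<le> c" using pq unfolding r_def by (auto simp: min_def max_def split: if_splits)
          then have "real (r - p) \<le> T + 1" using cT by linarith
          then have "real (r - p) * (2 * s) \<le> (T + 1) * (2 * s)" using s0 by (intro mult_right_mono) auto
          also have "\<dots> = 2 * M + 2 * s" unfolding T_def using spos by (simp add: field_simps)
          finally show ?thesis using s0 by simp
        qed
        then have "\<epsilon> * (real (r - p) * (2 * s)) \<le> \<epsilon> * (2 * M + 2)" using e0 by (intro mult_left_mono)
        then show ?thesis using LOW[of r] e0 by (simp add: algebra_simps)
      qed
      have high: "\<bar>\<Sum>k\<in>{r..<q}. a k * cos (real k * x)\<bar> \<le> 2 * \<Lambda> / M"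
      proof (cases "r = q")
        case True then show ?thesis using L0 M0 by simp
      next
        case False
        then have rq: "r < q" using pr by simp
        then have rc: "r \<ge> c" using pq unfolding r_def by (auto simp: min_def max_def split: if_splits)
        then have rT: "real r \<ge> T" using cT by linarith
        have r1: "r \<ge> 1" using pr p1 by simp
        have rpos: "real r > 0" using r1 by simp
        have D: "\<bar>\<Sum>k\<in>{r..<n}. cos (real k * x)\<bar> \<le> 1 / s" if "r \<le> n" "n \<le> q" for n
          using dirichlet[OF that(1), of x] spos unfolding s_def[symmetric] by (simp add: field_simps)
        have "(\<Sum>k\<in>{r..<q}. a k * cos (real k * x)) = (\<Sum>k\<in>{r..<q}. cos (real k * x) * a k)"
          by (simp add: mult.commute)
        then have "\<bar>\<Sum>k\<in>{r..<q}. a k * cos (real k * x)\<bar> \<le> 1 / s * \<bar>a q\<bar> + 1 / s * (\<Sum>n\<in>{r..<q}. \<bar>a n - a (Suc n)\<bar>)"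
          using abel_bound[of r q "\<lambda>k. cos (real k * x)" "1/s" a] D spos by simp
        also have "\<dots> \<le> 1 / s * (\<Lambda> / real r) + 1 / s * (\<Lambda> / real r)"
        proof (intro add_mono mult_left_mono)
          have "\<bar>a q\<bar> \<le> \<Lambda> / real q" using abd[of q] pr rq by simp
          also have "\<dots> \<le> \<Lambda> / real r" using L0 rpos rq by (intro divide_left_mono) auto
          finally show "\<bar>a q\<bar> \<le> \<Lambda> / real r" .
          show "(\<Sum>n\<in>{r..<q}. \<bar>a n - a (Suc n)\<bar>) \<le> \<Lambda> / real r" using var[of r q] pr by simp
        qed (use spos in auto)
        also have "\<dots> = 2 * \<Lambda> / (s * real r)" by (simp add: field_simps)
        also have "\<dots> \<le> 2 * \<Lambda> / M"
        proof (rule divide_left_mono)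
          have "s * T = M" unfolding T_def using spos by simp
          then show "M \<le> s * real r" using rT spos by (metis mult_left_mono less_imp_le)
        qed (use L0 M0 spos rpos in \<open>auto intro: mult_pos_pos\<close>)
        finally show ?thesis .
      qed
      show ?thesis unfolding split using low high by (smt (verit) abs_triangle_ineq)
    qed
  qed
qed



lemma psum_diff:
  fixes f :: "nat \<Rightarrow> real"
  assumes "m \<le> n"
  shows "(\<Sum>k\<le>n. f k) - (\<Sum>k\<le>m. f k) = (\<Sum>k\<in>{Suc m..<Suc n}. f k)"
proof -
  have e: "(\<Sum>k\<le>j. f k) = (\<Sum>k\<in>{0..<Suc j}. f k)" for j
    by (simp add: atLeast0LessThan lessThan_Suc_atMost)
  have "(\<Sum>k\<in>{0..<Suc m}. f k) + (\<Sum>k\<in>{Suc m..<Suc n}. f k) = (\<Sum>k\<in>{0..<Suc n}. f k)"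
    using assms by (intro sum.atLeastLessThan_concat) auto
  then show ?thesis unfolding e by simp
qed

lemma uc_of_summable:
  fixes a :: "nat \<Rightarrow> real"
  assumes gms: "GMS a" and sa: "summable a"
  shows "uniformly_convergent_on UNIV (\<lambda>N x. \<Sum>n\<le>N. a n * cos (real n * x))"
proof -
  have a0: "a \<longlonglongrightarrow> 0" using gms unfolding GMS_def by blast
  obtain \<Lambda>0 N2 where N21: "N2 \<ge> 1" and V: "\<And>P Q. P \<ge> N2 \<Longrightarrow> (\<Sum>k\<in>{P..<Q}. \<bar>a k - a (Suc k)\<bar>) \<le> \<Lambda>0 / real P"
    using key[OF gms sa] by blast
  define \<Lambda> where "\<Lambda> = \<bar>\<Lambda>0\<bar> + 1"
  have Lpos: "\<Lambda> > 0" unfolding \<Lambda>_def by simp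
  have V': "(\<Sum>k\<in>{P..<Q}. \<bar>a k - a (Suc k)\<bar>) \<le> \<Lambda> / real P" if "P \<ge> N2" for P Q
  proof -
    have "\<Lambda>0 / real P \<le> \<Lambda> / real P" unfolding \<Lambda>_def by (intro divide_right_mono) auto
    then show ?thesis using V[OF that, of Q] by linarith
  qed
  have AB: "\<bar>a P\<bar> \<le> \<Lambda> / real P" if "P \<ge> N2" for P
    by (rule abd_from_var[OF a0]) (rule V'[OF that])
  show ?thesis unfolding uniformly_convergent_eq_Cauchy
  proof (rule uniformly_Cauchy_onI')
    fix e :: real assume e: "e > 0"
    define M where "M = 4 * \<Lambda> / e"
    have Mpos: "M > 0" unfolding M_def using e Lpos by simp
    define \<epsilon> where "\<epsilon> = e / (4 * (3 + 2 * M))"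
    have epos: "\<epsilon> > 0" unfolding \<epsilon>_def using e Mpos by simp
    obtain N0 where N0: "\<And>m n. m \<ge> N0 \<Longrightarrow> \<bar>sum a {m..<n}\<bar> < \<epsilon>"
      using sa epos unfolding summable_Cauchy by (metis real_norm_def)
    have bnd: "\<epsilon> * (3 + 2 * M) + 2 * \<Lambda> / M < e"
    proof -
      have "\<epsilon> * (3 + 2 * M) = e / 4" unfolding \<epsilon>_def using Mpos by (simp add: field_simps)
      moreover have "2 * \<Lambda> / M = e / 2" unfolding M_def using e Lpos by (simp add: field_simps)
      ultimately show ?thesis using e by simp
    qed
    show "\<exists>M. \<forall>x\<in>UNIV. \<forall>m\<ge>M. \<forall>n>m. dist (\<Sum>k\<le>m. a k * cos (real k * x)) (\<Sum>k\<le>n. a k * cos (real k * x)) < e"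
    proof (intro exI ballI allI impI)
      fix x :: real and m n :: nat
      assume m: "m \<ge> max N0 N2" and mn: "n > m"
      have "dist (\<Sum>k\<le>m. a k * cos (real k * x)) (\<Sum>k\<le>n. a k * cos (real k * x))
          = \<bar>(\<Sum>k\<le>n. a k * cos (real k * x)) - (\<Sum>k\<le>m. a k * cos (real k * x))\<bar>"
        by (simp add: dist_real_def abs_minus_commute)
      also have "\<dots> = \<bar>\<Sum>k\<in>{Suc m..<Suc n}. a k * cos (real k * x)\<bar>"
        using mn by (subst psum_diff) auto
      also have "\<dots> \<le> \<epsilon> * (3 + 2 * M) + 2 * \<Lambda> / M"
      proof (rule tail_est)
        show "\<bar>\<Sum>k\<in>{Suc m..<q'}. a k\<bar> \<le> \<epsilon>" for q' using N0[of "Suc m" q'] m by simp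
        show "(\<Sum>k\<in>{P..<Q}. \<bar>a k - a (Suc k)\<bar>) \<le> \<Lambda> / real P" if "P \<ge> Suc m" for P Q
          using V'[of P Q] that m by simp
        show "\<bar>a P\<bar> \<le> \<Lambda> / real P" if "P \<ge> Suc m" for P
          using AB[of P] that m by simp
      qed (use Lpos Mpos epos in auto)
      also have "\<dots> < e" by (rule bnd)
      finally show "dist (\<Sum>k\<le>m. a k * cos (real k * x)) (\<Sum>k\<le>n. a k * cos (real k * x)) < e" .
    qed
  qed
qed


lemma pointwise_of_uc:
  fixes a :: "nat \<Rightarrow> real"
  assumes "uniformly_convergent_on UNIV (\<lambda>N x. \<Sum>n\<le>N. a n * cos (real n * x))"
  shows "\<exists>l. uniform_limit UNIV (\<lambda>N x. \<Sum>n\<le>N. a n * cos (real n * x)) l sequentially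
    \<and> (\<forall>x. (\<lambda>n. a n * cos (real n * x)) sums l x)"
proof -
  obtain l where l: "uniform_limit UNIV (\<lambda>N x. \<Sum>n\<le>N. a n * cos (real n * x)) l sequentially"
    using assms unfolding uniformly_convergent_on_def by blast
  have sl: "(\<lambda>n. a n * cos (real n * x)) sums l x" for x
    unfolding sums_def_le using tendsto_uniform_limitI[OF l, of x] by simp
  show ?thesis using l sl by blast
qed

theorem theorem3:
  fixes a :: "nat \<Rightarrow> real"
  assumes "GMS a"
  shows "(summable a \<longleftrightarrow>
           uniformly_convergent_on UNIV (\<lambda>N x. \<Sum>n\<le>N. a n * cos (real n * x)))
       \<and> (uniformly_convergent_on UNIV (\<lambda>N x. \<Sum>n\<le>N. a n * cos (real n * x)) \<longleftrightarrow>
           ((\<forall>x::real. summable (\<lambda>n. a n * cos (real n * x))) \<and>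
            bounded (range (\<lambda>x::real. \<Sum>n. a n * cos (real n * x)))))"
proof -
  let ?UC = "uniformly_convergent_on UNIV (\<lambda>N x. \<Sum>n\<le>N. a n * cos (real n * x))"
  have s0: "summable (\<lambda>n. a n * cos (real n * 0)) \<longleftrightarrow> summable a" by simp
  have I2: "?UC \<Longrightarrow> (\<forall>x::real. summable (\<lambda>n. a n * cos (real n * x))) \<and>
            bounded (range (\<lambda>x::real. \<Sum>n. a n * cos (real n * x)))"
  proof -
    assume uc: ?UC
    from pointwise_of_uc[OF uc] obtain l where l: "uniform_limit UNIV (\<lambda>N x. \<Sum>n\<le>N. a n * cos (real n * x)) l sequentially"
      and sl0: "\<forall>x. (\<lambda>n. a n * cos (real n * x)) sums l x"
      by blast
    have sl: "(\<lambda>n. a n * cos (real n * x)) sums l x" for x using sl0 by blast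
    have summ: "\<forall>x::real. summable (\<lambda>n. a n * cos (real n * x))" using sl summable_def by blast
    obtain N where N: "\<And>n x. n \<ge> N \<Longrightarrow> dist (\<Sum>k\<le>n. a k * cos (real k * x)) (l x) < 1"
      using l unfolding uniform_limit_sequentially_iff by (metis UNIV_I zero_less_one)
    have "\<bar>\<Sum>n. a n * cos (real n * x)\<bar> \<le> (\<Sum>k\<le>N. \<bar>a k\<bar>) + 1" for x
    proof -
      have eq: "(\<Sum>n. a n * cos (real n * x)) = l x" using sl[of x] by (simp add: sums_iff)
      have d: "\<bar>(\<Sum>k\<le>N. a k * cos (real k * x)) - l x\<bar> < 1" using N[of N x] by (simp add: dist_real_def)
      have "\<bar>\<Sum>k\<le>N. a k * cos (real k * x)\<bar> \<le> (\<Sum>k\<le>N. \<bar>a k * cos (real k * x)\<bar>)" by (rule sum_abs)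
      also have "\<dots> \<le> (\<Sum>k\<le>N. \<bar>a k\<bar>)"
        by (intro sum_mono) (simp add: abs_mult mult_left_le)
      finally show ?thesis unfolding eq using d by linarith
    qed
    then have "bounded (range (\<lambda>x::real. \<Sum>n. a n * cos (real n * x)))"
      unfolding bounded_iff by (metis (no_types, lifting) real_norm_def rangeE)
    with summ show ?thesis by blast
  qed
  have I3: "?UC \<Longrightarrow> summable a" using I2 s0 by blast
  have I1: "summable a \<Longrightarrow> ?UC" by (rule uc_of_summable[OF assms])
  have I4: "(\<forall>x::real. summable (\<lambda>n. a n * cos (real n * x))) \<Longrightarrow> summable a"
  proof -
    assume h: "\<forall>x::real. summable (\<lambda>n. a n * cos (real n * x))"
    then have "summable (\<lambda>n. a n * cos (real n * 0))" by blast
    then show "summable a" by simp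
  qed
  show ?thesis using I1 I2 I3 I4 by blast
qed


end
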